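(* Let $\mathcal Z$ be an instance space, $\mathcal W$ a hypothesis space and $\ell:\mathcal W\times\mathcal Z\to\mathbb R^+$ a non-negative loss. Let $\mu,\mu'$ be probability distributions on $\mathcal Z$ with $\mu\ll\mu'$. Let $S=\{Z_1,\dots,Z_n\}$ be drawn IID from $\mu$, and let $W$ be the output of any learning algorithm described by a conditional distribution $P_{W|S}$ (not necessarily empirical risk minimization), with marginal $P_W$. Let $L_{\mu'}(w)=\mathbb E_{Z\sim\mu'}[\ell(w,Z)]$ and $\hat L(w,S)=\frac1n\sum_{i=1}^n\ell(w,Z_i)$. Assume there are $b_-<0<b_+$ and a function $\psi$ such that under $(W,Z)\sim P_W\otimes\mu'$, $\log\mathbb E[e^{\lambda(\ell(W,Z)-\mathbb E[\ell(W,Z)])}]\le\psi(\lambda)$ for all $\lambda\in(b_-,b_+)$. With $\psi^{*-1}_{-}(x)=\inf_{\lambda\in[0,-b_-)}\frac{x+\psi(-\lambda)}{\lambda}$ and $\psi^{*-1}_{+}(x)=\inf_{\lambda\in[0,b_+)}\frac{x+\psi(\lambda)}{\lambda}$, we have $$\mathbb E_{WS}[L_{\mu'}(W)-\hat L(W,S)]\le\frac1n\sum_{i=1}^n\psi^{*-1}_{-}\big(I(W;Z_i)+D(\mu\|\mu')\big),$$ $$-\mathbb E_{WS}[L_{\mu'}(W)-\hat L(W,S)]\le\frac1n\sum_{i=1}^n\psi^{*-1}_{+}\big(I(W;Z_i)+D(\mu\|\mu')\big).$$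
   Context: $I(\cdot;\cdot)$ is mutual information under the joint distribution of $(W,S)$ given by $P_{W|S}$ and $\mu^{\otimes n}$; $D(\mu\|\mu')$ is the Kullback–Leibler divergence. *)

theory Defs
  imports "HOL-Probability.Probability"
begin

text \<open>The infimum is taken over lambda in the open interval (0, -b_minus) resp. (0, b_plus):
  the endpoint lambda = 0 only contributes the value +infinity (division by zero)
  in the paper's convention.\<close>

definition psi_inv_minus :: "(real \<Rightarrow> real) \<Rightarrow> real \<Rightarrow> real \<Rightarrow> real" where
  "psi_inv_minus psi bm x = Inf ((\<lambda>l. (x + psi (- l)) / l) ` {0<..< - bm})"

definition psi_inv_plus :: "(real \<Rightarrow> real) \<Rightarrow> real \<Rightarrow> real \<Rightarrow> real" where
  "psi_inv_plus psi bp x = Inf ((\<lambda>l. (x + psi l) / l) ` {0<..< bp})"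

text \<open>Joint distribution of (W,S): S ~ mu^n (product measure on functions {..<n} -> Z),
  W ~ K S (the learning algorithm, a Markov kernel).\<close>

definition joint_WS ::
  "'w measure \<Rightarrow> 'z measure \<Rightarrow> nat \<Rightarrow> 'z measure \<Rightarrow> ((nat \<Rightarrow> 'z) \<Rightarrow> 'w measure)
     \<Rightarrow> ('w \<times> (nat \<Rightarrow> 'z)) measure" where
  "joint_WS Wm Z n mu K =
     (PiM {..<n} (\<lambda>_. mu)) \<bind>
       (\<lambda>s. K s \<bind> (\<lambda>w. return (Wm \<Otimes>\<^sub>M PiM {..<n} (\<lambda>_. Z)) (w, s)))"

definition emp_risk :: "nat \<Rightarrow> ('w \<Rightarrow> 'z \<Rightarrow> real) \<Rightarrow> 'w \<Rightarrow> (nat \<Rightarrow> 'z) \<Rightarrow> real" where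
  "emp_risk n loss w s = (1 / real n) * (\<Sum>i<n. loss w (s i))"

definition pop_risk :: "'z measure \<Rightarrow> ('w \<Rightarrow> 'z \<Rightarrow> real) \<Rightarrow> 'w \<Rightarrow> real" where
  "pop_risk mu' loss w = (\<integral>z. loss w z \<partial>mu')"

end

theory Submission
  imports Defs
begin

lemma DV_ineq:
  fixes Q :: "'a measure" and F :: "'a \<Rightarrow> ennreal" and g :: "'a \<Rightarrow> real"
  assumes Q: "prob_space Q" and F[measurable]: "F \<in> borel_measurable Q"
    and P: "P = density Q F" "prob_space P"
    and g[measurable]: "g \<in> borel_measurable Q"
    and ig: "integrable Q (\<lambda>x. exp (g x))" "integrable P g"
    and iF: "integrable P (\<lambda>x. ln (enn2real (F x)))"
  shows "(\<integral>x. g x \<partial>P) \<le> (\<integral>x. ln (enn2real (F x)) \<partial>P) + ln (\<integral>x. exp (g x) \<partial>Q)"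
proof -
  interpret Q: prob_space Q by fact
  interpret P: prob_space P by fact
  have setsP: "sets P = sets Q" using P by simp
  define c where "c = (\<integral>x. exp (g x) \<partial>Q)"
  have c0: "0 \<le> c" unfolding c_def by (simp add: integral_nonneg_AE)
  have "c \<noteq> 0"
  proof
    assume "c = 0"
    then have "AE x in Q. exp (g x) = 0"
      using integral_nonneg_eq_0_iff_AE[OF ig(1)] unfolding c_def by simp
    then have "AE x in Q. False" by simp
    then show False by (simp add: Q.AE_False)
  qed
  with c0 have cpos: "0 < c" by simp
  have "(\<integral>\<^sup>+x. F x \<partial>Q) = emeasure P (space P)"
    using P(1) by (simp add: emeasure_density)
  also have "\<dots> = 1" by (simp add: P.emeasure_space_1)
  finally have "(\<integral>\<^sup>+x. F x \<partial>Q) \<noteq> \<infinity>" by simp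
  then have Ffin: "AE x in Q. F x \<noteq> \<infinity>" by (rule nn_integral_noteq_infinite[OF F])
  have AEP: "AE x in P. 0 < F x \<and> F x \<noteq> \<infinity>"
    unfolding P(1) using Ffin by (subst AE_density) (auto elim: AE_mp)
  define u where "u x = exp (g x) / (c * enn2real (F x))" for x
  have u_meas[measurable]: "u \<in> borel_measurable Q" unfolding u_def by measurable
  have "(\<integral>\<^sup>+x. ennreal (u x) \<partial>P) = (\<integral>\<^sup>+x. F x * ennreal (u x) \<partial>Q)"
    unfolding P(1) by (rule nn_integral_density) auto
  also have "\<dots> \<le> (\<integral>\<^sup>+x. ennreal (exp (g x) / c) \<partial>Q)"
  proof (rule nn_integral_mono_AE)
    show "AE x in Q. F x * ennreal (u x) \<le> ennreal (exp (g x) / c)"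
      using Ffin
    proof eventually_elim
      case (elim x)
      show ?case
      proof (cases "F x = 0")
        case True then show ?thesis by simp
      next
        case False
        with elim obtain r where r: "F x = ennreal r" "0 < r"
          by (cases "F x") (auto simp: ennreal_less_zero_iff zero_less_iff_neq_zero)
        have "0 \<le> u x" unfolding u_def using cpos r by simp
        then have "F x * ennreal (u x) = ennreal (r * u x)"
          using r by (simp add: ennreal_mult)
        also have "r * u x = exp (g x) / c" using r cpos by (simp add: u_def)
        finally show ?thesis by simp
      qed
    qed
  qed
  also have "\<dots> = ennreal (\<integral>x. exp (g x) / c \<partial>Q)"
    by (rule nn_integral_eq_integral) (use ig cpos in auto)
  also have "(\<integral>x. exp (g x) / c \<partial>Q) = 1" using cpos by (simp add: c_def)
  finally have nnu: "(\<integral>\<^sup>+x. ennreal (u x) \<partial>P) \<le> 1" by simp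
  have u_measP[measurable]: "u \<in> borel_measurable P" unfolding measurable_cong_sets[OF setsP refl] by (rule u_meas)
  have u_nonneg: "\<And>x. 0 \<le> u x" unfolding u_def using cpos by simp
  have iu: "integrable P u"
  proof (rule integrableI_nonneg)
    show "(\<integral>\<^sup>+x. ennreal (u x) \<partial>P) < \<infinity>" using nnu by (simp add: le_less_trans)
  qed (use u_nonneg in auto)
  have intu: "(\<integral>x. u x \<partial>P) \<le> 1"
    proof -
    have "(\<integral>x. u x \<partial>P) = enn2real (\<integral>\<^sup>+x. ennreal (u x) \<partial>P)"
      by (rule integral_eq_nn_integral) (use u_nonneg in auto)
    also have "\<dots> \<le> 1" using nnu by (simp add: enn2real_leI)
    finally show ?thesis .
  qed
  have pw: "AE x in P. g x - ln (enn2real (F x)) - ln c \<le> u x - 1"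
    using AEP
  proof eventually_elim
    case (elim x)
    then have phi: "0 < enn2real (F x)"
      by (simp add: enn2real_positive_iff top.not_eq_extremum)
    have "ln (u x) = g x - ln c - ln (enn2real (F x))"
      unfolding u_def using phi cpos by (simp add: ln_div ln_mult)
    moreover have "ln (u x) \<le> u x - 1"
      by (rule ln_le_minus_one) (use phi cpos in \<open>simp add: u_def\<close>)
    ultimately show ?case by simp
  qed
  have "(\<integral>x. g x - ln (enn2real (F x)) - ln c \<partial>P) \<le> (\<integral>x. u x - 1 \<partial>P)"
    by (rule integral_mono_AE) (use ig iF iu pw in auto)
  also have "\<dots> = (\<integral>x. u x \<partial>P) - 1" using iu by (simp add: P.prob_space)
  also have "\<dots> \<le> 0" using intu by simp
  finally have "(\<integral>x. g x \<partial>P) - (\<integral>x. ln (enn2real (F x)) \<partial>P) - ln c \<le> 0"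
    using ig iF by (simp add: P.prob_space)
  then show ?thesis unfolding c_def by simp
qed

lemma J_props:
  fixes Z :: "'z measure" and Wm :: "'w measure" and mu :: "'z measure" and n :: nat
    and K :: "(nat \<Rightarrow> 'z) \<Rightarrow> 'w measure"
  assumes mu: "prob_space mu" "sets mu = sets Z"
  assumes K: "K \<in> measurable (PiM {..<n} (\<lambda>_. Z)) (prob_algebra Wm)"
  shows "prob_space (joint_WS Wm Z n mu K)"
    and "sets (joint_WS Wm Z n mu K) = sets (Wm \<Otimes>\<^sub>M PiM {..<n} (\<lambda>_. Z))"
    and "\<And>i. i < n \<Longrightarrow> distr (joint_WS Wm Z n mu K) Z (\<lambda>p. snd p i) = mu"
proof -
  define S where "S = PiM {..<n} (\<lambda>_. mu)"
  define M where "M = Wm \<Otimes>\<^sub>M PiM {..<n} (\<lambda>_. Z)"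
  have S: "prob_space S" unfolding S_def by (rule prob_space_PiM) (use mu in auto)
  have setsS: "sets S = sets (PiM {..<n} (\<lambda>_. Z))" unfolding S_def
    by (rule sets_PiM_cong) (use mu in auto)
  have spS: "space S = space (PiM {..<n} (\<lambda>_. Z))" using setsS by (rule sets_eq_imp_space_eq)
  have KS: "K \<in> measurable S (prob_algebra Wm)"
    unfolding measurable_cong_sets[OF setsS refl] by (rule K)
  define k where "k s = K s \<bind> (\<lambda>w. return M (w, s))" for s
  have ret: "(\<lambda>(s, w). return M (w, s)) \<in> S \<Otimes>\<^sub>M Wm \<rightarrow>\<^sub>M prob_algebra M"
  proof -
    have "(\<lambda>(s, w). (w, s)) \<in> S \<Otimes>\<^sub>M Wm \<rightarrow>\<^sub>M M"
      unfolding M_def measurable_cong_sets[OF sets_pair_measure_cong[OF setsS refl] refl] by measurable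
    then show ?thesis
      using measurable_compose[OF _ measurable_return_prob_space[of M]]
      by (simp add: case_prod_beta')
  qed
  have kmeas: "k \<in> S \<rightarrow>\<^sub>M prob_algebra M"
    unfolding k_def by (rule measurable_bind_prob_space2[OF KS ret])
  have J: "joint_WS Wm Z n mu K = S \<bind> k"
    unfolding joint_WS_def S_def M_def k_def ..
  have Sin: "S \<in> space (prob_algebra S)" using S by (simp add: space_prob_algebra)
  show "prob_space (joint_WS Wm Z n mu K)" unfolding J by (rule prob_space_bind'[OF Sin kmeas])
  show "sets (joint_WS Wm Z n mu K) = sets (Wm \<Otimes>\<^sub>M PiM {..<n} (\<lambda>_. Z))"
    unfolding J using sets_bind'[OF Sin kmeas] by (simp add: M_def)
  fix i assume i: "i < n"
  have Sne: "space S \<noteq> {}" using S prob_space.not_empty by blast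
  have fi: "(\<lambda>p. snd p i) \<in> M \<rightarrow>\<^sub>M Z" unfolding M_def using i by (measurable; simp)
  have "distr (S \<bind> k) Z (\<lambda>p. snd p i) = S \<bind> (\<lambda>s. distr (k s) Z (\<lambda>p. snd p i))"
    by (rule distr_bind[OF measurable_prob_algebraD[OF kmeas] Sne fi])
  also have "\<dots> = S \<bind> (\<lambda>s. return Z (s i))"
  proof (rule bind_cong_All, intro ballI)
    fix s assume s: "s \<in> space S"
    have Ks: "K s \<in> space (prob_algebra Wm)" using KS s by (rule measurable_space)
    then have Ksp: "prob_space (K s)" "sets (K s) = sets Wm" by (auto simp: space_prob_algebra)
    have Kne: "space (K s) \<noteq> {}" using Ksp prob_space.not_empty by blast
    have spK: "space (K s) = space Wm" using Ksp(2) by (rule sets_eq_imp_space_eq)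
    have r: "(\<lambda>w. return M (w, s)) \<in> K s \<rightarrow>\<^sub>M subprob_algebra M"
    proof -
      have "(\<lambda>w. (w, s)) \<in> Wm \<rightarrow>\<^sub>M M" unfolding M_def using s spS by (measurable; simp)
      then have "(\<lambda>w. return M (w, s)) \<in> Wm \<rightarrow>\<^sub>M subprob_algebra M"
        using measurable_compose[OF _ return_measurable[of M]] by (simp add: comp_def)
      then show ?thesis unfolding measurable_cong_sets[OF Ksp(2) refl] .
    qed
    have "distr (k s) Z (\<lambda>p. snd p i) = K s \<bind> (\<lambda>w. distr (return M (w, s)) Z (\<lambda>p. snd p i))"
      unfolding k_def by (rule distr_bind[OF r Kne fi])
    also have "\<dots> = K s \<bind> (\<lambda>w. return Z (s i))"
    proof (rule bind_cong_All, intro ballI)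
      fix w assume "w \<in> space (K s)"
      then have "(w, s) \<in> space M" using s spS spK by (simp add: M_def space_pair_measure)
      then show "distr (return M (w, s)) Z (\<lambda>p. snd p i) = return Z (s i)"
        by (simp add: distr_return[OF fi])
    qed
    also have "\<dots> = return Z (s i)"
      by (rule bind_const'[OF Ksp(1)]) (use s spS i in \<open>auto intro!: subprob_space_return simp: space_PiM PiE_iff\<close>)
    finally show "distr (k s) Z (\<lambda>p. snd p i) = return Z (s i)" .
  qed
  also have "\<dots> = distr S Z (\<lambda>s. s i)"
  proof (rule bind_return_distr'[OF Sne])
    show "(\<lambda>s. s i) \<in> S \<rightarrow>\<^sub>M Z"
      unfolding measurable_cong_sets[OF setsS refl] using i by simp
  qed
  also have "\<dots> = distr S mu (\<lambda>s. s i)"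
    by (rule distr_cong) (use mu in auto)
  also have "\<dots> = mu" unfolding S_def by (rule distr_PiM_component) (use mu i in auto)
  finally show "distr (joint_WS Wm Z n mu K) Z (\<lambda>p. snd p i) = mu" unfolding J .
qed

lemma per_i:
  fixes Z :: "'z measure" and Wm :: "'w measure" and PW :: "'w measure"
    and mu mu' :: "'z measure" and P :: "('w \<times> 'z) measure"
    and loss :: "'w \<Rightarrow> 'z \<Rightarrow> real" and psi :: "real \<Rightarrow> real" and bm bp m :: real
  assumes PW: "prob_space PW" "sets PW = sets Wm"
  assumes mu: "prob_space mu" "sets mu = sets Z"
  assumes mu': "prob_space mu'" "sets mu' = sets Z"
  assumes ac: "absolutely_continuous mu' mu"
  assumes D_finite: "integrable mu (entropy_density (exp 1) mu' mu)"
  assumes P: "prob_space P" "sets P = sets (Wm \<Otimes>\<^sub>M Z)" "distr P Z snd = mu"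
  assumes acP: "absolutely_continuous (PW \<Otimes>\<^sub>M mu) P"
    and IP: "integrable P (entropy_density (exp 1) (PW \<Otimes>\<^sub>M mu) P)"
  assumes loss_meas: "(\<lambda>p. loss (fst p) (snd p)) \<in> borel_measurable (Wm \<Otimes>\<^sub>M Z)"
  assumes cgf: "\<And>l. bm < l \<Longrightarrow> l < bp \<Longrightarrow>
     integrable (PW \<Otimes>\<^sub>M mu') (\<lambda>p. exp (l * (loss (fst p) (snd p) - m))) \<and>
     ln (\<integral>p. exp (l * (loss (fst p) (snd p) - m)) \<partial>(PW \<Otimes>\<^sub>M mu')) \<le> psi l"
  shows "0 \<le> KL_divergence (exp 1) (PW \<Otimes>\<^sub>M mu) P + KL_divergence (exp 1) mu' mu"
    and "integrable P (\<lambda>p. loss (fst p) (snd p)) \<Longrightarrow> bm < l \<Longrightarrow> l < bp \<Longrightarrow>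
       l * ((\<integral>p. loss (fst p) (snd p) \<partial>P) - m)
         \<le> KL_divergence (exp 1) (PW \<Otimes>\<^sub>M mu) P + KL_divergence (exp 1) mu' mu + psi l"
proof -
  define Q where "Q = PW \<Otimes>\<^sub>M mu'"
  define R1 where "R1 = PW \<Otimes>\<^sub>M mu"
  define h where "h = RN_deriv mu' mu"
  define f1 where "f1 = RN_deriv R1 P"
  interpret PW: prob_space PW by fact
  interpret mu: prob_space mu by fact
  interpret mu': prob_space mu' by fact
  interpret P: prob_space P by fact
  have Qp: "prob_space Q" unfolding Q_def by (rule prob_space_pair) fact+
  have R1p: "prob_space R1" unfolding R1_def by (rule prob_space_pair) fact+
  interpret R1: prob_space R1 by fact
  have setsQ[measurable_cong]: "sets Q = sets (Wm \<Otimes>\<^sub>M Z)" unfolding Q_def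
    using PW(2) mu'(2) by (rule sets_pair_measure_cong)
  have setsR1[measurable_cong]: "sets R1 = sets (Wm \<Otimes>\<^sub>M Z)" unfolding R1_def
    using PW(2) mu(2) by (rule sets_pair_measure_cong)
  note [measurable_cong] = P(2) mu(2) mu'(2) PW(2)
  have h_meas[measurable]: "h \<in> borel_measurable Z"
    using borel_measurable_RN_deriv[of mu' mu] unfolding h_def measurable_cong_sets[OF mu'(2) refl] .
  have f1_meas[measurable]: "f1 \<in> borel_measurable (Wm \<Otimes>\<^sub>M Z)"
    using borel_measurable_RN_deriv[of R1 P] unfolding f1_def measurable_cong_sets[OF setsR1 refl] .
  have mu_eq: "density mu' h = mu"
    unfolding h_def by (rule mu'.density_RN_deriv[OF ac]) (simp add: mu(2) mu'(2))
  have R1_eq: "R1 = density Q (\<lambda>p. h (snd p))"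
  proof -
    have "R1 = density PW (\<lambda>_. 1) \<Otimes>\<^sub>M density mu' h" unfolding R1_def mu_eq density_1 ..
    also have "\<dots> = density (PW \<Otimes>\<^sub>M mu') (\<lambda>(x, y). 1 * h y)"
    proof (rule pair_measure_density)
      show "h \<in> borel_measurable mu'" by simp
      show "sigma_finite_measure mu'" by unfold_locales
      show "sigma_finite_measure (density mu' h)" unfolding mu_eq by unfold_locales
    qed simp
    finally show ?thesis unfolding Q_def by (simp add: case_prod_beta')
  qed
  have P_eq1: "density R1 f1 = P"
    unfolding f1_def by (rule R1.density_RN_deriv[OF acP[folded R1_def]]) (simp add: P(2) setsR1)
  define F where "F x = h (snd x) * f1 x" for x
  have F_meas[measurable]: "F \<in> borel_measurable (Wm \<Otimes>\<^sub>M Z)" unfolding F_def by measurable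
  have P_eq: "P = density Q F"
    unfolding P_eq1[symmetric] R1_eq F_def
    by (rule density_density_eq) (measurable)
  have f1_fin: "AE x in R1. f1 x \<noteq> \<infinity>"
    unfolding f1_def by (rule R1.RN_deriv_finite[OF _ acP[folded R1_def]]) (unfold_locales, simp add: P(2) setsR1)
  have AE_f1: "AE x in P. 0 < f1 x \<and> f1 x \<noteq> \<infinity>"
    unfolding P_eq1[symmetric] using f1_fin by (subst AE_density) (auto elim: AE_mp)
  have h_fin: "AE z in mu'. h z \<noteq> \<infinity>"
    unfolding h_def by (rule mu'.RN_deriv_finite[OF _ ac]) (unfold_locales, simp add: mu(2) mu'(2))
  have AE_h_mu: "AE z in mu. 0 < h z \<and> h z \<noteq> \<infinity>"
    unfolding mu_eq[symmetric] using h_fin by (subst AE_density) (auto elim: AE_mp)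
  have AE_h: "AE x in P. 0 < h (snd x) \<and> h (snd x) \<noteq> \<infinity>"
    by (rule AE_distrD[of snd P Z]) (use AE_h_mu P(3) in auto)
  have lnF: "AE x in P. ln (enn2real (F x)) = ln (enn2real (h (snd x))) + ln (enn2real (f1 x))"
    using AE_f1 AE_h
  proof eventually_elim
    case (elim x)
    then have "0 < enn2real (h (snd x))" "0 < enn2real (f1 x)"
      by (auto simp: enn2real_positive_iff top.not_eq_extremum)
    then show ?case unfolding F_def by (simp add: enn2real_mult ln_mult)
  qed
  have I1: "KL_divergence (exp 1) R1 P = (\<integral>x. ln (enn2real (f1 x)) \<partial>P)"
    unfolding KL_divergence_def entropy_density_def f1_def by (simp add: log_def comp_def)
  have iI1: "integrable P (\<lambda>x. ln (enn2real (f1 x)))"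
    using IP unfolding R1_def[symmetric] entropy_density_def f1_def by (simp add: log_def comp_def)
  have D1: "KL_divergence (exp 1) mu' mu = (\<integral>x. ln (enn2real (h (snd x))) \<partial>P)"
  proof -
    have "KL_divergence (exp 1) mu' mu = (\<integral>z. ln (enn2real (h z)) \<partial>mu)"
      unfolding KL_divergence_def entropy_density_def h_def by (simp add: log_def comp_def)
    also have "\<dots> = (\<integral>z. ln (enn2real (h z)) \<partial>distr P Z snd)" using P(3) by simp
    also have "\<dots> = (\<integral>x. ln (enn2real (h (snd x))) \<partial>P)"
      by (rule integral_distr) measurable
    finally show ?thesis .
  qed
  have iD1: "integrable P (\<lambda>x. ln (enn2real (h (snd x))))"
  proof -
    have "integrable mu (\<lambda>z. ln (enn2real (h z)))"
      using D_finite unfolding entropy_density_def h_def by (simp add: log_def comp_def)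
    then have "integrable (distr P Z snd) (\<lambda>z. ln (enn2real (h z)))" using P(3) by simp
    then show ?thesis by (subst (asm) integrable_distr_eq) measurable
  qed
  have iF: "integrable P (\<lambda>x. ln (enn2real (F x)))"
    using Bochner_Integration.integrable_add[OF iD1 iI1] by (subst integrable_cong_AE[OF _ _ lnF]) measurable
  have intF: "(\<integral>x. ln (enn2real (F x)) \<partial>P)
      = KL_divergence (exp 1) R1 P + KL_divergence (exp 1) mu' mu"
  proof -
    have "(\<integral>x. ln (enn2real (F x)) \<partial>P) = (\<integral>x. ln (enn2real (h (snd x))) + ln (enn2real (f1 x)) \<partial>P)"
      by (rule integral_cong_AE[OF _ _ lnF]) measurable
    also have "\<dots> = KL_divergence (exp 1) R1 P + KL_divergence (exp 1) mu' mu"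
      unfolding I1 D1 using Bochner_Integration.integral_add[OF iD1 iI1] by simp
    finally show ?thesis .
  qed
  have DV: "\<And>g. g \<in> borel_measurable (Wm \<Otimes>\<^sub>M Z) \<Longrightarrow> integrable Q (\<lambda>x. exp (g x)) \<Longrightarrow>
      integrable P g \<Longrightarrow>
      (\<integral>x. g x \<partial>P) \<le> KL_divergence (exp 1) R1 P + KL_divergence (exp 1) mu' mu
           + ln (\<integral>x. exp (g x) \<partial>Q)"
  proof -
    fix g :: "'w \<times> 'z \<Rightarrow> real"
    assume g: "g \<in> borel_measurable (Wm \<Otimes>\<^sub>M Z)" "integrable Q (\<lambda>x. exp (g x))" "integrable P g"
    have "g \<in> borel_measurable Q" using g(1) unfolding measurable_cong_sets[OF setsQ refl] .
    moreover have "F \<in> borel_measurable Q" using F_meas unfolding measurable_cong_sets[OF setsQ refl] .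
    ultimately show "?thesis g"
      using DV_ineq[OF Qp _ P_eq P(1) _ g(2,3) iF] intF by simp
  qed
  show "0 \<le> KL_divergence (exp 1) (PW \<Otimes>\<^sub>M mu) P + KL_divergence (exp 1) mu' mu"
  proof -
    interpret Q: prob_space Q by fact
    have "(\<integral>x. (0::real) \<partial>P) \<le> KL_divergence (exp 1) R1 P + KL_divergence (exp 1) mu' mu
           + ln (\<integral>x. exp (0::real) \<partial>Q)"
      by (rule DV) auto
    moreover have "(\<integral>x. exp (0::real) \<partial>Q) = 1" using Q.prob_space by simp
    ultimately show ?thesis unfolding R1_def by simp
  qed
  assume iL: "integrable P (\<lambda>p. loss (fst p) (snd p))" and l: "bm < l" "l < bp"
  have "(\<integral>x. l * (loss (fst x) (snd x) - m) \<partial>P)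
      \<le> KL_divergence (exp 1) R1 P + KL_divergence (exp 1) mu' mu
           + ln (\<integral>x. exp (l * (loss (fst x) (snd x) - m)) \<partial>Q)"
    by (rule DV) (use cgf[OF l] iL in \<open>simp_all add: Q_def\<close>)
  also have "ln (\<integral>x. exp (l * (loss (fst x) (snd x) - m)) \<partial>Q) \<le> psi l"
    using cgf[OF l] by (simp add: Q_def)
  finally show "l * ((\<integral>p. loss (fst p) (snd p) \<partial>P) - m)
         \<le> KL_divergence (exp 1) (PW \<Otimes>\<^sub>M mu) P + KL_divergence (exp 1) mu' mu + psi l"
    using iL by (simp add: R1_def P.prob_space)
qed

lemma psi_inv_minus_ge:
  assumes bm: "bm < 0" and bnd: "\<And>l. 0 < l \<Longrightarrow> l < - bm \<Longrightarrow> c \<le> (x + psi (- l)) / l"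
  shows "c \<le> psi_inv_minus psi bm x"
  unfolding psi_inv_minus_def
  by (rule cInf_greatest) (use bm bnd in auto)

lemma psi_inv_plus_ge:
  assumes bp: "0 < bp" and bnd: "\<And>l. 0 < l \<Longrightarrow> l < bp \<Longrightarrow> c \<le> (x + psi l) / l"
  shows "c \<le> psi_inv_plus psi bp x"
  unfolding psi_inv_plus_def
  by (rule cInf_greatest) (use bp bnd in auto)

lemma psi_nonneg:
  fixes Q :: "'a measure" and X :: "'a \<Rightarrow> real" and l r :: real
  assumes "prob_space Q" "integrable Q X" "integrable Q (\<lambda>p. exp (l * (X p - (\<integral>p. X p \<partial>Q))))"
    "ln (\<integral>p. exp (l * (X p - (\<integral>p. X p \<partial>Q))) \<partial>Q) \<le> r"
  shows "0 \<le> r"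
proof -
  interpret prob_space Q by fact
  define m where "m = (\<integral>p. X p \<partial>Q)"
  have "(\<integral>p. 1 + l * (X p - m) \<partial>Q) \<le> (\<integral>p. exp (l * (X p - m)) \<partial>Q)"
    by (rule Bochner_Integration.integral_mono) (use assms(2,3) in \<open>auto simp: m_def\<close>)
  moreover have "(\<integral>p. 1 + l * (X p - m) \<partial>Q) = 1"
    using assms(2) by (simp add: prob_space m_def)
  ultimately have "1 \<le> (\<integral>p. exp (l * (X p - m)) \<partial>Q)" by simp
  then have "0 \<le> ln (\<integral>p. exp (l * (X p - m)) \<partial>Q)" by simp
  then show ?thesis using assms(4) by (simp add: m_def)
qed

theorem corollary1:
  fixes Z :: "'z measure" and Wm :: "'w measure"
    and mu mu' :: "'z measure" and n :: nat
    and K :: "(nat \<Rightarrow> 'z) \<Rightarrow> 'w measure"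
    and loss :: "'w \<Rightarrow> 'z \<Rightarrow> real"
    and psi :: "real \<Rightarrow> real" and bm bp :: real
  defines "J \<equiv> joint_WS Wm Z n mu K"
  defines "PW \<equiv> distr J Wm fst"
  defines "Q \<equiv> PW \<Otimes>\<^sub>M mu'"
  defines "m \<equiv> (\<integral>p. loss (fst p) (snd p) \<partial>Q)"
  assumes n_pos: "0 < n"
  assumes mu: "prob_space mu" "sets mu = sets Z"
  assumes mu': "prob_space mu'" "sets mu' = sets Z"
  assumes ac: "absolutely_continuous mu' mu"
  assumes D_finite: "integrable mu (entropy_density (exp 1) mu' mu)"
  assumes K: "K \<in> measurable (PiM {..<n} (\<lambda>_. Z)) (prob_algebra Wm)"
  assumes loss_meas: "(\<lambda>p. loss (fst p) (snd p)) \<in> borel_measurable (Wm \<Otimes>\<^sub>M Z)"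
  assumes loss_nonneg: "\<And>w z. 0 \<le> loss w z"
  assumes I_finite: "\<And>i. i < n \<Longrightarrow>
     absolutely_continuous (distr J Wm fst \<Otimes>\<^sub>M distr J Z (\<lambda>p. snd p i))
                           (distr J (Wm \<Otimes>\<^sub>M Z) (\<lambda>p. (fst p, snd p i))) \<and>
     integrable (distr J (Wm \<Otimes>\<^sub>M Z) (\<lambda>p. (fst p, snd p i)))
       (entropy_density (exp 1) (distr J Wm fst \<Otimes>\<^sub>M distr J Z (\<lambda>p. snd p i))
                                (distr J (Wm \<Otimes>\<^sub>M Z) (\<lambda>p. (fst p, snd p i))))"
  assumes b: "bm < 0" "0 < bp"
  assumes loss_int: "integrable Q (\<lambda>p. loss (fst p) (snd p))"
  assumes cgf: "\<And>l. bm < l \<Longrightarrow> l < bp \<Longrightarrow>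
     integrable Q (\<lambda>p. exp (l * (loss (fst p) (snd p) - m))) \<and>
     ln (\<integral>p. exp (l * (loss (fst p) (snd p) - m)) \<partial>Q) \<le> psi l"
  shows "((\<integral>p. pop_risk mu' loss (fst p) - emp_risk n loss (fst p) (snd p) \<partial>J)
           \<le> (1 / real n) * (\<Sum>i<n. psi_inv_minus psi bm
                 (prob_space.mutual_information J (exp 1) Wm Z fst (\<lambda>p. snd p i)
                  + KL_divergence (exp 1) mu' mu)))
         \<and> (- (\<integral>p. pop_risk mu' loss (fst p) - emp_risk n loss (fst p) (snd p) \<partial>J)
           \<le> (1 / real n) * (\<Sum>i<n. psi_inv_plus psi bp
                 (prob_space.mutual_information J (exp 1) Wm Z fst (\<lambda>p. snd p i)
                  + KL_divergence (exp 1) mu' mu)))"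
proof -
  have Jp: "prob_space J" and setsJ[measurable_cong]: "sets J = sets (Wm \<Otimes>\<^sub>M PiM {..<n} (\<lambda>_. Z))"
    and marg: "\<And>i. i < n \<Longrightarrow> distr J Z (\<lambda>p. snd p i) = mu"
    using J_props[OF mu K] unfolding J_def by auto
  interpret J: prob_space J by (rule Jp)
  have PWp: "prob_space PW" unfolding PW_def by (rule J.prob_space_distr) measurable
  have setsPW[measurable_cong]: "sets PW = sets Wm" unfolding PW_def by simp
  note [measurable_cong] = mu(2) mu'(2)
  interpret PW: prob_space PW by (rule PWp)
  interpret mu': prob_space mu' by (rule mu')
  have Qp: "prob_space Q" unfolding Q_def by (rule prob_space_pair) (fact PWp, fact mu'(1))
  interpret pf: pair_sigma_finite PW mu'
    by (intro pair_sigma_finite.intro prob_space_imp_sigma_finite PWp mu'(1))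
  have setsQ[measurable_cong]: "sets Q = sets (Wm \<Otimes>\<^sub>M Z)" unfolding Q_def
    using setsPW mu'(2) by (rule sets_pair_measure_cong)
  have iL: "integrable (PW \<Otimes>\<^sub>M mu') (\<lambda>p. loss (fst p) (snd p))" using loss_int unfolding Q_def .
  have pop_int: "integrable PW (pop_risk mu' loss)"
    using pf.integrable_fst'[OF iL] unfolding pop_risk_def by simp
  have m_eq: "m = (\<integral>w. pop_risk mu' loss w \<partial>PW)"
    using pf.integral_fst'[OF iL] unfolding pop_risk_def m_def Q_def by simp
  have pop_meas: "pop_risk mu' loss \<in> borel_measurable Wm"
    using borel_measurable_integrable[OF pop_int] unfolding measurable_cong_sets[OF setsPW refl] .
  have popJ_int: "integrable J (\<lambda>p. pop_risk mu' loss (fst p))"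
    using pop_int unfolding PW_def by (subst (asm) integrable_distr_eq) (measurable, rule pop_meas)
  have popJ: "(\<integral>p. pop_risk mu' loss (fst p) \<partial>J) = m"
    unfolding m_eq PW_def by (subst integral_distr) (measurable, rule pop_meas, simp)
  have pair_meas: "\<And>i. i < n \<Longrightarrow> (\<lambda>p. (fst p, snd p i)) \<in> J \<rightarrow>\<^sub>M Wm \<Otimes>\<^sub>M Z"
    by (measurable; simp)
  have lossi_meas: "\<And>i. i < n \<Longrightarrow> (\<lambda>p. loss (fst p) (snd p i)) \<in> borel_measurable J"
    using measurable_compose[OF pair_meas loss_meas] by simp
  define A where "A i = prob_space.mutual_information J (exp 1) Wm Z fst (\<lambda>p. snd p i)
                  + KL_divergence (exp 1) mu' mu" for i
  define E where "E i = (\<integral>p. loss (fst p) (snd p i) \<partial>J)" for i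
  have psi_nn: "\<And>l. bm < l \<Longrightarrow> l < bp \<Longrightarrow> 0 \<le> psi l"
  proof -
    fix l assume l: "bm < l" "l < bp"
    show "0 \<le> psi l"
      by (rule psi_nonneg[OF Qp loss_int, of l]) (use cgf[OF l] in \<open>simp_all add: m_def\<close>)
  qed
  have key: "\<And>i. i < n \<Longrightarrow> 0 \<le> A i \<and> (integrable J (\<lambda>p. loss (fst p) (snd p i)) \<longrightarrow>
       (\<forall>l. bm < l \<and> l < bp \<longrightarrow> l * (E i - m) \<le> A i + psi l))"
  proof -
    fix i assume i: "i < n"
    define P where "P = distr J (Wm \<Otimes>\<^sub>M Z) (\<lambda>p. (fst p, snd p i))"
    have Pp: "prob_space P" unfolding P_def by (rule J.prob_space_distr[OF pair_meas[OF i]])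
    have setsP: "sets P = sets (Wm \<Otimes>\<^sub>M Z)" unfolding P_def by simp
    have Pm: "distr P Z snd = mu"
      unfolding P_def using i by (subst distr_distr) (measurable, simp add: comp_def marg)
    have A_eq: "A i = KL_divergence (exp 1) (PW \<Otimes>\<^sub>M mu) P + KL_divergence (exp 1) mu' mu"
      unfolding A_def J.mutual_information_def P_def PW_def marg[OF i] ..
    have IF: "absolutely_continuous (PW \<Otimes>\<^sub>M mu) P \<and> integrable P (entropy_density (exp 1) (PW \<Otimes>\<^sub>M mu) P)"
      using I_finite[OF i] unfolding marg[OF i] P_def PW_def .
    have cgf': "\<And>l. bm < l \<Longrightarrow> l < bp \<Longrightarrow>
     integrable (PW \<Otimes>\<^sub>M mu') (\<lambda>p. exp (l * (loss (fst p) (snd p) - m))) \<and>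
     ln (\<integral>p. exp (l * (loss (fst p) (snd p) - m)) \<partial>(PW \<Otimes>\<^sub>M mu')) \<le> psi l"
      using cgf unfolding Q_def .
    note pi = per_i[OF PWp setsPW mu mu' ac D_finite Pp setsP Pm IF[THEN conjunct1] IF[THEN conjunct2] loss_meas cgf']
    have EP: "(\<integral>p. loss (fst p) (snd p) \<partial>P) = E i"
      unfolding P_def E_def by (subst integral_distr[OF pair_meas[OF i] loss_meas]) simp
    have iP: "integrable P (\<lambda>p. loss (fst p) (snd p)) = integrable J (\<lambda>p. loss (fst p) (snd p i))"
      unfolding P_def by (subst integrable_distr_eq[OF pair_meas[OF i] loss_meas]) simp
    show "?thesis i"
      using pi(1) pi(2) unfolding A_eq[symmetric] EP iP by blast
  qed
  have bminus: "\<And>i. i < n \<Longrightarrow> integrable J (\<lambda>p. loss (fst p) (snd p i)) \<Longrightarrow>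
      m - E i \<le> psi_inv_minus psi bm (A i)"
  proof -
    fix i assume i: "i < n" and int: "integrable J (\<lambda>p. loss (fst p) (snd p i))"
    show "m - E i \<le> psi_inv_minus psi bm (A i)"
    proof (rule psi_inv_minus_ge[OF b(1)])
      fix l :: real assume l: "0 < l" "l < - bm"
      have "\<forall>l. bm < l \<and> l < bp \<longrightarrow> l * (E i - m) \<le> A i + psi l" using key[OF i] int by blast
      moreover have "bm < - l \<and> - l < bp" using l b by auto
      ultimately have "(- l) * (E i - m) \<le> A i + psi (- l)" by blast
      then have "l * (m - E i) \<le> A i + psi (- l)" by (simp add: algebra_simps)
      then show "m - E i \<le> (A i + psi (- l)) / l" using l by (simp add: pos_le_divide_eq mult.commute)
    qed
  qed
  have bplus: "\<And>i. i < n \<Longrightarrow> integrable J (\<lambda>p. loss (fst p) (snd p i)) \<Longrightarrow>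
      E i - m \<le> psi_inv_plus psi bp (A i)"
  proof -
    fix i assume i: "i < n" and int: "integrable J (\<lambda>p. loss (fst p) (snd p i))"
    show "E i - m \<le> psi_inv_plus psi bp (A i)"
    proof (rule psi_inv_plus_ge[OF b(2)])
      fix l :: real assume l: "0 < l" "l < bp"
      have "l * (E i - m) \<le> A i + psi l" using key[OF i] int l b by auto
      then show "E i - m \<le> (A i + psi l) / l" using l by (simp add: pos_le_divide_eq mult.commute)
    qed
  qed
  have nn_minus: "\<And>i. i < n \<Longrightarrow> 0 \<le> psi_inv_minus psi bm (A i)"
  proof -
    fix i assume i: "i < n"
    show "0 \<le> psi_inv_minus psi bm (A i)"
    proof (rule psi_inv_minus_ge[OF b(1)])
      fix l :: real assume l: "0 < l" "l < - bm"
      have "0 \<le> A i" using key[OF i] by auto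
      moreover have "0 \<le> psi (- l)" using psi_nn l b by auto
      ultimately show "0 \<le> (A i + psi (- l)) / l" using l by simp
    qed
  qed
  have nn_plus: "\<And>i. i < n \<Longrightarrow> 0 \<le> psi_inv_plus psi bp (A i)"
  proof -
    fix i assume i: "i < n"
    show "0 \<le> psi_inv_plus psi bp (A i)"
    proof (rule psi_inv_plus_ge[OF b(2)])
      fix l :: real assume l: "0 < l" "l < bp"
      have "0 \<le> A i" using key[OF i] by auto
      moreover have "0 \<le> psi l" using psi_nn l b by auto
      ultimately show "0 \<le> (A i + psi l) / l" using l by simp
    qed
  qed
  define G where "G = (\<integral>p. pop_risk mu' loss (fst p) - emp_risk n loss (fst p) (snd p) \<partial>J)"
  have sum_minus: "0 \<le> (1 / real n) * (\<Sum>i<n. psi_inv_minus psi bm (A i))"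
    using nn_minus by (intro mult_nonneg_nonneg sum_nonneg) auto
  have sum_plus: "0 \<le> (1 / real n) * (\<Sum>i<n. psi_inv_plus psi bp (A i))"
    using nn_plus by (intro mult_nonneg_nonneg sum_nonneg) auto
  have main: "G \<le> (1 / real n) * (\<Sum>i<n. psi_inv_minus psi bm (A i))
      \<and> - G \<le> (1 / real n) * (\<Sum>i<n. psi_inv_plus psi bp (A i))"
  proof (cases "\<forall>i<n. integrable J (\<lambda>p. loss (fst p) (snd p i))")
    case True
    have emp: "(\<integral>p. emp_risk n loss (fst p) (snd p) \<partial>J) = (1 / real n) * (\<Sum>i<n. E i)"
      unfolding emp_risk_def E_def using True by (simp add: integral_sum)
    have emp_int: "integrable J (\<lambda>p. emp_risk n loss (fst p) (snd p))"
      unfolding emp_risk_def by (intro Bochner_Integration.integrable_mult_right Bochner_Integration.integrable_sum) (use True in auto)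
    have G_eq: "G = (1 / real n) * (\<Sum>i<n. m - E i)"
      unfolding G_def using popJ_int emp_int popJ emp n_pos
      by (simp add: sum_subtractf field_simps)
    have "G \<le> (1 / real n) * (\<Sum>i<n. psi_inv_minus psi bm (A i))"
      unfolding G_eq by (rule mult_left_mono[OF sum_mono]) (use bminus True in auto)
    moreover have "- G = (1 / real n) * (\<Sum>i<n. E i - m)"
      unfolding G_eq using n_pos by (simp add: sum_subtractf field_simps)
    moreover have "(1 / real n) * (\<Sum>i<n. E i - m) \<le> (1 / real n) * (\<Sum>i<n. psi_inv_plus psi bp (A i))"
      by (rule mult_left_mono[OF sum_mono]) (use bplus True in auto)
    ultimately show ?thesis by simp
  next
    case False
    then obtain j where j: "j < n" "\<not> integrable J (\<lambda>p. loss (fst p) (snd p j))" by auto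
    have "\<not> integrable J (\<lambda>p. pop_risk mu' loss (fst p) - emp_risk n loss (fst p) (snd p))"
    proof
      assume int: "integrable J (\<lambda>p. pop_risk mu' loss (fst p) - emp_risk n loss (fst p) (snd p))"
      have "integrable J (\<lambda>p. pop_risk mu' loss (fst p) - (pop_risk mu' loss (fst p) - emp_risk n loss (fst p) (snd p)))"
        using popJ_int int by (rule Bochner_Integration.integrable_diff)
      then have "integrable J (\<lambda>p. real n * emp_risk n loss (fst p) (snd p))" by simp
      then have iS: "integrable J (\<lambda>p. \<Sum>i<n. loss (fst p) (snd p i))"
        unfolding emp_risk_def using n_pos by simp
      have "integrable J (\<lambda>p. loss (fst p) (snd p j))"
      proof (rule Bochner_Integration.integrable_bound[OF iS])
        show "(\<lambda>p. loss (fst p) (snd p j)) \<in> borel_measurable J" by (rule lossi_meas[OF j(1)])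
        show "AE p in J. norm (loss (fst p) (snd p j)) \<le> norm (\<Sum>i<n. loss (fst p) (snd p i))"
        proof (rule AE_I2)
          fix p
          have "loss (fst p) (snd p j) \<le> (\<Sum>i<n. loss (fst p) (snd p i))"
            by (rule member_le_sum) (use j loss_nonneg in auto)
          moreover have "0 \<le> (\<Sum>i<n. loss (fst p) (snd p i))" by (rule sum_nonneg) (use loss_nonneg in auto)
          ultimately show "norm (loss (fst p) (snd p j)) \<le> norm (\<Sum>i<n. loss (fst p) (snd p i))"
            using loss_nonneg by simp
        qed
      qed
      with j(2) show False by simp
    qed
    then have "G = 0" unfolding G_def by (rule not_integrable_integral_eq)
    then show ?thesis using sum_minus sum_plus by simp
  qed
  then show ?thesis unfolding G_def A_def .
qed

end
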